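(* Let $p$ be an odd prime and $r\in\{1,2,\ldots,(p-1)/2\}$. Then $$\sum_{k=0}^{\frac{p-1}2}\frac{\binom{2k}k^2}{32^k}k(k-1)\cdots(k-r+1)\equiv\begin{cases}0\pmod{p^2}&\text{if }4\mid(p+1-2r),\\ (-1)^{\frac{p-1+2r}4}2^{-\frac{p-1}2}\dfrac{(\frac{p-1}2+r)!}{(\frac{p-1-2r}4)!\,(\frac{p-1+2r}4)!}\pmod{p^2}&\text{if }4\mid(p-1-2r).\end{cases}$$
   Context: Congruences are between rational numbers whose denominators are prime to $p$. *)

theory Defs
  imports "HOL-Number_Theory.Number_Theory"
begin

text \<open>Congruence of rational numbers modulo an integer m, with respect to a prime p:
  x and y are congruent mod m if x - y = a / b with integers a, b, where b is prime to p
  and m divides a.  (Rationals whose denominators are prime to p.)\<close>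
definition qcong :: "int \<Rightarrow> rat \<Rightarrow> rat \<Rightarrow> int \<Rightarrow> bool" where
  "qcong p x y m \<longleftrightarrow> (\<exists>a b :: int. \<not> p dvd b \<and> m dvd a \<and> x - y = of_int a / of_int b)"

end

theory Submission
  imports Defs
begin


lemma binom_step: "Suc k * (n choose Suc k) = (n - k) * (n choose k)"
proof -
  have "Suc k * (n choose Suc k) = n * ((n - 1) choose k)"
    using times_binomial_minus1_eq[of "Suc k" n] by simp
  also have "\<dots> = (n - k) * (n choose k)"
    using binomial_absorb_comp[of n k] by simp
  finally show ?thesis .
qed

definition ff :: "nat \<Rightarrow> nat \<Rightarrow> rat" where
  "ff k m = (\<Prod>j<m. (of_int (int k - int j) :: rat))"

lemma ff_Suc: "ff k (Suc m) = ff k m * (of_nat k - of_nat m)"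
  unfolding ff_def by simp

lemma ff_shift: "(of_nat k + 1) * ff k m = (of_nat k + 1 - of_nat m) * ff (Suc k) m"
proof (induction m)
  case 0 then show ?case by (simp add: ff_def)
next
  case (Suc m)
  have "(of_nat k + 1) * ff k (Suc m) = ((of_nat k + 1) * ff k m) * (of_nat k - of_nat m)"
    by (simp add: ff_Suc)
  also have "\<dots> = (of_nat k + 1 - of_nat m) * ff (Suc k) m * (of_nat k - of_nat m)"
    using Suc by simp
  also have "\<dots> = (of_nat k + 1 - of_nat (Suc m)) * ff (Suc k) (Suc m)"
    by (simp add: ff_Suc algebra_simps)
  finally show ?case .
qed

lemma ff_zero: "k < m \<Longrightarrow> ff k m = 0"
  unfolding ff_def by (rule prod_zero) (auto intro!: bexI[of _ k])

lemma ff_self: "ff k k = fact k"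
proof (induction k)
  case 0 show ?case by (simp add: ff_def)
next
  case (Suc k)
  have "ff (Suc k) k = (of_nat k + 1) * ff k k" using ff_shift[of k k] by simp
  then show ?case using Suc by (simp add: ff_Suc fact_Suc)
qed

definition T :: "nat \<Rightarrow> nat \<Rightarrow> rat" where
  "T n k = of_nat (n choose k) * of_nat ((n + k) choose k) * (-1/2) ^ k"

lemma T_rec: "T n (Suc k) * (of_nat k + 1)^2
   = -(1/2) * (of_nat n - of_nat k) * (of_nat n + of_nat k + 1) * T n k"
proof (cases "k \<le> n")
  case True
  have h1: "(of_nat k + 1) * (of_nat (n choose Suc k)::rat) = (of_nat n - of_nat k) * of_nat (n choose k)"
  proof -
    have "(of_nat (Suc k * (n choose Suc k))::rat) = of_nat ((n - k) * (n choose k))"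
      using binom_step[of k n] by (simp only: of_nat_mult[symmetric])
    then show ?thesis using True by (simp add: of_nat_diff algebra_simps del: binomial_Suc_Suc)
  qed
  have h2: "(of_nat k + 1) * (of_nat (Suc (n + k) choose Suc k)::rat) = (of_nat n + of_nat k + 1) * of_nat ((n + k) choose k)"
  proof -
    have "(of_nat (Suc k * (Suc (n + k) choose Suc k))::rat) = of_nat (Suc (n + k) * ((n + k) choose k))"
      using Suc_times_binomial[of k "n + k"] by (simp only: of_nat_mult[symmetric])
    then show ?thesis by (simp add: algebra_simps del: binomial_Suc_Suc)
  qed
  have "T n (Suc k) * (of_nat k + 1)^2 =
     ((of_nat k + 1) * (of_nat (n choose Suc k)::rat)) * ((of_nat k + 1) * of_nat (Suc (n + k) choose Suc k)) * (-1/2)^Suc k"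
    by (simp add: T_def power2_eq_square mult_ac del: binomial_Suc_Suc)
  also have "\<dots> = ((of_nat n - of_nat k) * of_nat (n choose k)) * ((of_nat n + of_nat k + 1) * of_nat ((n + k) choose k)) * (-1/2)^Suc k"
    by (simp only: h1 h2)
  also have "\<dots> = -(1/2) * (of_nat n - of_nat k) * (of_nat n + of_nat k + 1) * T n k"
    by (simp add: T_def mult_ac)
  finally show ?thesis .
next
  case False
  then show ?thesis by (simp add: T_def binomial_eq_0 del: binomial_Suc_Suc)
qed

definition d :: "nat \<Rightarrow> nat \<Rightarrow> rat" where
  "d n m = (\<Sum>k=0..n. T n k * ff k m)"

lemma d_rec: "d n (Suc (Suc m)) = -((of_nat n - of_nat m) * (of_nat n + of_nat m + 1)) * d n m"
proof -
  define g where "g k = T n k * of_nat k * (of_nat k - of_nat m) * ff k m" for k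
  have gS: "g (Suc k) = -(1/2) * (of_nat n - of_nat k) * (of_nat n + of_nat k + 1) * T n k * ff k m" for k
  proof -
    have "g (Suc k) = T n (Suc k) * (of_nat k + 1) * ((of_nat k + 1 - of_nat m) * ff (Suc k) m)"
      by (simp add: g_def algebra_simps)
    also have "\<dots> = T n (Suc k) * (of_nat k + 1) * ((of_nat k + 1) * ff k m)"
      by (simp only: ff_shift)
    also have "\<dots> = (T n (Suc k) * (of_nat k + 1)^2) * ff k m"
      by (simp add: power2_eq_square mult_ac)
    also have "\<dots> = -(1/2) * (of_nat n - of_nat k) * (of_nat n + of_nat k + 1) * T n k * ff k m"
      by (simp only: T_rec)
    finally show ?thesis .
  qed
  have tm: "T n k * ff k (Suc (Suc m)) + ((of_nat n - of_nat m) * (of_nat n + of_nat m + 1)) * (T n k * ff k m)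
      = 2 * (g k - g (Suc k))" for k
    unfolding gS by (simp add: g_def ff_Suc field_simps; simp add: algebra_simps)
  have "d n (Suc (Suc m)) + ((of_nat n - of_nat m) * (of_nat n + of_nat m + 1)) * d n m
      = (\<Sum>k=0..n. T n k * ff k (Suc (Suc m)) + ((of_nat n - of_nat m) * (of_nat n + of_nat m + 1)) * (T n k * ff k m))"
    by (simp add: d_def sum.distrib sum_distrib_left)
  also have "\<dots> = (\<Sum>k<Suc n. 2 * (g k - g (Suc k)))"
    by (simp only: tm atLeast0AtMost lessThan_Suc_atMost)
  also have "\<dots> = 2 * (g 0 - g (Suc n))"
    by (simp only: sum_distrib_left[symmetric] sum_lessThan_telescope')
  also have "\<dots> = 0"
    by (simp add: g_def T_def binomial_eq_0 del: binomial_Suc_Suc)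
  finally show ?thesis by (simp add: algebra_simps eq_neg_iff_add_eq_0)
qed

lemma d_top: "d n (Suc n) = 0"
  unfolding d_def by (rule sum.neutral) (auto simp: ff_zero)

lemma d_self: "d n n = of_nat ((2*n) choose n) * (-1/2)^n * of_nat (fact n)"
proof -
  have "d n n = (\<Sum>k\<in>{n}. T n k * ff k n)"
    unfolding d_def by (rule sum.mono_neutral_left[symmetric]) (auto simp: ff_zero)
  then show ?thesis by (simp add: T_def ff_self mult_2)
qed

definition E :: "nat \<Rightarrow> nat \<Rightarrow> rat" where
  "E n m = (-1) ^ ((n + m) div 2) / 2 ^ n * of_nat (fact (n + m))
            / (of_nat (fact ((n - m) div 2)) * of_nat (fact ((n + m) div 2)))"

lemma E_self: "E n n = d n n"
proof -
  have f: "fact n * fact n * ((2*n) choose n) = (fact (2*n) :: nat)"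
    using binomial_fact_lemma[of n "2*n"] by (simp add: mult_2)
  have f0: "(of_nat (fact n * fact n * ((2*n) choose n)) :: rat) = of_nat (fact (2*n))"
    using f by (rule arg_cong)
  then have f': "fact n * fact n * of_nat ((2*n) choose n) = (fact (2*n) :: rat)"
    by (simp only: of_nat_mult of_nat_fact)
  have h: "(-(1/2)::rat)^n = (-1)^n / 2^n"
    by (simp add: power_divide[symmetric])
  have "E n n = (-1)^n / 2^n * of_nat (fact (2*n)) / of_nat (fact n)"
    by (simp add: E_def mult_2)
  also have "\<dots> = of_nat ((2*n) choose n) * (-1/2)^n * of_nat (fact n)"
    by (simp add: h field_simps) (metis f' mult.commute mult.assoc)
  finally show ?thesis by (simp add: d_self)
qed

lemma aux:
  fixes s c F2 Ft Fa A T :: rat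
  assumes "Ft \<noteq> 0" "Fa \<noteq> 0" "c \<noteq> 0" "A \<ge> 0" "T \<ge> 0"
  shows "(-s)/c * ((2*A+2)*(2*A+1)*F2) / (Ft * ((A+1)*Fa)) = -((2*T+2)*(2*A+1)) * (s/c * F2 / (((T+1)*Ft)*Fa))"
proof -
  have a: "A + 1 \<noteq> 0" "T + 1 \<noteq> 0" using assms by linarith+
  have d1: "c * (Ft * ((A+1)*Fa)) \<noteq> 0" and d2: "c * ((T+1)*Ft*Fa) \<noteq> 0" using a assms by simp_all
  have l: "(-s)/c * ((2*A+2)*(2*A+1)*F2) / (Ft * ((A+1)*Fa)) = ((-s)*((2*A+2)*(2*A+1)*F2)) / (c * (Ft * ((A+1)*Fa)))"
    by simp
  have r: "-((2*T+2)*(2*A+1)) * (s/c * F2 / (((T+1)*Ft)*Fa)) = (-((2*T+2)*(2*A+1)) * (s * F2)) / (c * ((T+1)*Ft*Fa))"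
    by (simp add: mult_ac)
  show ?thesis unfolding l r frac_eq_eq[OF d1 d2] by (simp add: algebra_simps)
qed

lemma E_rec:
  assumes "m + 2 \<le> n" "even (n - m)"
  shows "E n (Suc (Suc m)) = -((of_nat n - of_nat m) * (of_nat n + of_nat m + 1)) * E n m"
proof -
  obtain q where q: "n - m = 2 * q" using assms(2) by (blast elim: evenE)
  define t where "t = q - 1"
  have t: "n = m + 2 * t + 2" using q assms(1) unfolding t_def by linarith
  define a where "a = m + t + 1"
  have e1: "(n + Suc (Suc m)) div 2 = Suc a" "(n - Suc (Suc m)) div 2 = t"
       "n + Suc (Suc m) = Suc (Suc (2*a))" "Suc (Suc (2*a)) div 2 = Suc a"
    "(n + m) div 2 = a" "(n - m) div 2 = Suc t" "n + m = 2 * a" "2 * a div 2 = a"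
    using t a_def by simp_all
  have L: "E n (Suc (Suc m)) = (-1)^(Suc a)/2^n * fact(Suc(Suc(2*a))) / (fact t * fact (Suc a))"
    unfolding E_def by (simp only: e1 of_nat_fact)
  have R: "E n m = (-1)^a/2^n * fact(2*a) / (fact (Suc t) * fact a)"
    unfolding E_def by (simp only: e1 of_nat_fact)
  have nm: "(of_nat n - of_nat m :: rat) = 2 * of_nat t + 2" "(of_nat n + of_nat m + 1 :: rat) = 2 * of_nat a + 1"
    using t a_def by simp_all
  have f1: "(fact (Suc (Suc (2*a)))::rat) = (2*of_nat a+2)*(2*of_nat a+1)*fact(2*a)"
    by (simp add: fact_Suc algebra_simps)
  have f2: "(fact (Suc a)::rat) = (of_nat a + 1)*fact a" by (simp add: fact_Suc algebra_simps)
  have f3: "(fact (Suc t)::rat) = (of_nat t + 1)*fact t" by (simp add: fact_Suc algebra_simps)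
  have s: "(-1::rat)^Suc a = -((-1)^a)" by simp
  show ?thesis unfolding L R nm f1 f2 f3 s by (rule aux) simp_all
qed

lemma Q1: "k \<le> n \<Longrightarrow> 4^k * (fact k)^2 * int (n choose k) * int ((n + k) choose k)
   = (\<Prod>j\<in>{1..k}. (int (2*n+1))^2 - (2 * int j - 1)^2)"
proof (induction k)
  case 0 then show ?case by simp
next
  case (Suc k)
  have h1: "int (Suc k) * int (n choose Suc k) = int (n - k) * int (n choose k)"
    using binom_step[of k n] by (simp only: of_nat_mult[symmetric])
  have h2: "int (Suc k) * int (Suc (n + k) choose Suc k) = int (Suc (n + k)) * int ((n + k) choose k)"
    using Suc_times_binomial[of k "n + k"] by (simp only: of_nat_mult[symmetric])
  have nk: "int (n - k) = int n - int k" using Suc.prems by simp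
  have "4^Suc k * (fact (Suc k))^2 * int (n choose Suc k) * int ((n + Suc k) choose Suc k)
      = 4 * (4^k * (fact k)^2) * (int (Suc k) * int (n choose Suc k)) * (int (Suc k) * int (Suc (n + k) choose Suc k))"
    by (simp add: fact_Suc power2_eq_square mult_ac del: binomial_Suc_Suc)
  also have "\<dots> = 4 * (4^k * (fact k)^2) * (int (n - k) * int (n choose k)) * (int (Suc (n + k)) * int ((n + k) choose k))"
    by (simp only: h1 h2)
  also have "\<dots> = (4^k * (fact k)^2 * int (n choose k) * int ((n + k) choose k)) * ((int (2*n+1))^2 - (2 * int (Suc k) - 1)^2)"
    by (simp add: nk power2_eq_square algebra_simps)
  also have "\<dots> = (\<Prod>j\<in>{1..Suc k}. (int (2*n+1))^2 - (2 * int j - 1)^2)"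
    using Suc by (simp add: prod.cl_ivl_Suc mult_ac)
  finally show ?case .
qed

lemma Q2: "(P::int) dvd (\<Prod>j\<in>{1..k}. P - x j) - (-1)^k * (\<Prod>j\<in>{1..k}. x j)"
proof (induction k)
  case 0 then show ?case by simp
next
  case (Suc k)
  have "(\<Prod>j\<in>{1..Suc k}. P - x j) - (-1)^Suc k * (\<Prod>j\<in>{1..Suc k}. x j)
     = P * (\<Prod>j\<in>{1..k}. P - x j) - x (Suc k) * ((\<Prod>j\<in>{1..k}. P - x j) - (-1)^k * (\<Prod>j\<in>{1..k}. x j))"
    by (simp add: prod.cl_ivl_Suc algebra_simps)
  then show ?case using Suc by (simp add: dvd_diff)
qed

lemma Q3: "2^k * fact k * (\<Prod>j\<in>{1..k}. 2 * int j - 1) = fact (2*k)"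
proof (induction k)
  case 0 then show ?case by simp
next
  case (Suc k)
  have eq: "2 * Suc k = Suc (Suc (2*k))" by simp
  have "2^Suc k * fact (Suc k) * (\<Prod>j\<in>{1..Suc k}. 2 * int j - 1)
     = (2 * int k + 2) * (2 * int k + 1) * (2^k * fact k * (\<Prod>j\<in>{1..k}. 2 * int j - 1))"
    by (simp add: prod.cl_ivl_Suc fact_Suc algebra_simps)
  also have "\<dots> = fact (Suc (Suc (2*k)))"
    by (simp only: Suc.IH) (simp add: fact_Suc algebra_simps)
  finally show ?case by (simp only: eq)
qed

lemma key:
  assumes p: "prime (2*n+1::nat)" and kn: "k \<le> n"
  shows "(int (2*n+1))^2 dvd (int ((2*k) choose k))^2 - (-16)^k * (int (n choose k) * int ((n + k) choose k))"
proof -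
  define P where "P = (int (2*n+1))^2"
  define A where "A = int ((2*k) choose k)"
  define B where "B = int (n choose k) * int ((n + k) choose k)"
  define F where "F = (fact k :: int)"
  define Q where "Q = (\<Prod>j\<in>{1..k}. 2 * int j - 1)"
  define e where "e = 4^k * F^2 * B - (-1)^k * Q^2"
  have e1: "4^k * F^2 * B = (\<Prod>j\<in>{1..k}. P - (2 * int j - 1)^2)"
    using Q1[OF kn] by (simp add: F_def B_def P_def mult_ac)
  have Qsq: "(\<Prod>j\<in>{1..k}. (2 * int j - 1)^2) = Q^2"
    by (simp add: Q_def prod_power_distrib)
  have "P dvd (\<Prod>j\<in>{1..k}. P - (2*int j-1)^2) - (-1)^k * (\<Prod>j\<in>{1..k}. (2*int j-1)^2)"
    by (rule Q2)
  then have Pe: "P dvd e" unfolding e_def e1 by (simp only: Qsq)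
  have AF: "A * F * F = fact (2*k)"
  proof -
    have "fact k * fact k * ((2*k) choose k) = (fact (2*k) :: nat)"
      using binomial_fact_lemma[of k "2*k"] by (simp add: mult_2)
    then have "int (fact k * fact k * ((2*k) choose k)) = int (fact (2*k))" by simp
    then show ?thesis by (simp add: A_def F_def of_nat_fact mult_ac)
  qed
  have F0: "F \<noteq> 0" by (simp add: F_def)
  have QA: "2^k * Q = A * F"
  proof -
    have "(2^k * Q) * F = (A * F) * F"
      using Q3[of k] AF by (simp add: Q_def F_def mult_ac)
    then show ?thesis using F0 by simp
  qed
  have m16: "(-16::int)^k = (-1)^k * 4^k * 4^k"
  proof -
    have "(-16::int)^k = ((-1)*4*4)^k" by simp
    then show ?thesis by (simp only: power_mult_distrib)
  qed
  have p4: "(2::int)^k * 2^k = 4^k"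
  proof -
    have "(4::int)^k = (2*2)^k" by simp
    then show ?thesis by (simp only: power_mult_distrib)
  qed
  have p1: "(-1::int)^k * (-1)^k = 1"
  proof -
    have "((-1::int)*(-1))^k = 1" by simp
    then show ?thesis by (simp only: power_mult_distrib)
  qed
  have "(A^2 - (-16)^k * B) * F^2 = - ((-1)^k * 4^k * e)"
  proof -
    have "(A^2 - (-16)^k * B) * F^2 = (A*F)^2 - (-1)^k * 4^k * (4^k * F^2 * B)"
      unfolding m16 power2_eq_square by (simp add: algebra_simps)
    also have "\<dots> = (2^k * Q)^2 - (-1)^k * 4^k * (e + (-1)^k * Q^2)"
      by (simp add: QA e_def)
    also have "\<dots> = (2^k * 2^k) * Q^2 - (-1)^k * 4^k * e - ((-1)^k * (-1)^k) * 4^k * Q^2"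
      unfolding power2_eq_square by (simp add: algebra_simps)
    also have "\<dots> = - ((-1)^k * 4^k * e)"
      unfolding p4 p1 by simp
    finally show ?thesis .
  qed
  then have "P dvd (A^2 - (-16)^k * B) * F^2" using Pe by simp
  moreover have "coprime P (F^2)"
  proof -
    have np: "\<not> (2*n+1) dvd fact k" using p kn by (simp add: prime_dvd_fact_iff)
    have ip: "prime (int (2*n+1))" using p by (simp only: prime_nat_int_transfer)
    have "\<not> int (2*n+1) dvd F" unfolding F_def using np by (metis int_dvd_int_iff of_nat_fact)
    then have "coprime (int (2*n+1)) F" by (rule prime_imp_coprime[OF ip])
    then show ?thesis by (simp add: P_def)
  qed
  ultimately have "P dvd A^2 - (-16)^k * B"
    using coprime_dvd_mult_left_iff by blast
  then show ?thesis by (simp add: P_def A_def B_def)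
qed

lemma d_closed: "s \<le> n + 1 \<Longrightarrow> d n (n + 1 - s) = (if odd s then E n (n + 1 - s) else 0)"
proof (induction s rule: less_induct)
  case (less s)
  show ?case
  proof (cases s)
    case 0
    have "d n (n + 1) = 0" using d_top[of n] by simp
    then show ?thesis using 0 by simp
  next
    case (Suc t)
    show ?thesis
    proof (cases t)
      case 0
      then show ?thesis using Suc E_self[of n] by simp
    next
      case (Suc u)
      have s: "s = Suc (Suc u)" using \<open>s = Suc t\<close> Suc by simp
      define m where "m = n + 1 - s"
      have IH: "d n (n + 1 - u) = (if odd u then E n (n + 1 - u) else 0)"
        using less.IH[of u] less.prems s by simp
      have mm: "n + 1 - u = Suc (Suc m)" using less.prems s m_def by simp
      have mn: "m < n" using less.prems s m_def by simp
      define c where "c = (of_nat n - of_nat m) * (of_nat n + of_nat m + 1 :: rat)"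
      have c0: "c \<noteq> 0" using mn unfolding c_def by simp
      have rec: "d n (Suc (Suc m)) = - c * d n m" unfolding c_def by (rule d_rec)
      show ?thesis
      proof (cases "odd u")
        case True
        have "E n (Suc (Suc m)) = - c * E n m" unfolding c_def
        proof (rule E_rec)
          show "m + 2 \<le> n" using less.prems s m_def True by (cases u) auto
          show "even (n - m)" using less.prems s m_def True by (simp add: odd_Suc_minus_one)
        qed
        then have "- c * d n m = - c * E n m" using rec IH mm True by simp
        then have "d n m = E n m" using c0 by simp
        then show ?thesis using True s m_def by simp
      next
        case False
        then have "- c * d n m = 0" using rec IH mm by simp
        then have "d n m = 0" using c0 by simp
        then show ?thesis using False s m_def by simp
      qed
    qed
  qed
qed

lemma d_val: "r \<le> n \<Longrightarrow> d n r = (if even (n - r) then E n r else 0)"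
  using d_closed[of "n + 1 - r" n] by (simp add: Suc_diff_le)

theorem theorem2p3:
  fixes p r :: nat
  assumes "prime p" and "odd p" and "1 \<le> r" and "r \<le> (p - 1) div 2"
  defines "S \<equiv> (\<Sum>k = 0..(p - 1) div 2.
             (of_nat ((2 * k) choose k) ^ 2 / 32 ^ k) * (\<Prod>j<r. (of_int (int k - int j) :: rat)))"
  shows "(4 dvd (p + 1 - 2 * r) \<longrightarrow> qcong (int p) S 0 (int p ^ 2)) \<and>
         (4 dvd (p - 1 - 2 * r) \<longrightarrow>
            qcong (int p) S
              ((-1) ^ ((p - 1 + 2 * r) div 4) / 2 ^ ((p - 1) div 2)
                * of_nat (fact ((p - 1) div 2 + r))
                / (of_nat (fact ((p - 1 - 2 * r) div 4)) * of_nat (fact ((p - 1 + 2 * r) div 4))))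
              (int p ^ 2))"
proof -
  define n where "n = (p - 1) div 2"
  have p2: "p = 2 * n + 1" using assms(2) unfolding n_def by presburger
  have rn: "r \<le> n" using assms(4) unfolding n_def .
  have pr: "prime (2 * n + 1)" using assms(1) p2 by simp
  define D where "D k = (int ((2*k) choose k))^2 - (-16)^k * (int (n choose k) * int ((n + k) choose k))" for k
  define Fz where "Fz k = (\<Prod>j<r. (int k - int j))" for k
  define N where "N = (\<Sum>k=0..n. D k * 32^(n-k) * Fz k)"
  have S2: "S = (\<Sum>k=0..n. (of_nat ((2 * k) choose k) ^ 2 / 32 ^ k) * ff k r)"
    unfolding S_def ff_def n_def by (rule refl)
  have ffz: "ff k r = of_int (Fz k)" for k
    unfolding ff_def Fz_def by simp
  have hh: "(-1/2::rat)^k = (-16)^k / 32^k" for k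
  proof -
    have "(-16::rat)^k / 32^k = (-16/32)^k" by (simp only: power_divide)
    then show ?thesis by simp
  qed
  have tm: "(of_nat ((2 * k) choose k) ^ 2 / 32 ^ k) * ff k r - T n k * ff k r
      = of_int (D k * 32^(n-k) * Fz k) / of_int (32^n)" if kn: "k \<le> n" for k
  proof -
    have h32: "(32::rat)^n = 32^k * 32^(n-k)" using kn by (simp add: power_add[symmetric])
    have hh': "(-(1/2)::rat)^k * 32^k = (-16)^k"
    proof -
      have "(-(1/2)::rat)^k * 32^k = (-(1/2)*32)^k" by (simp only: power_mult_distrib)
      then show ?thesis by simp
    qed
    have "of_int (D k * 32^(n-k) * Fz k) / (of_int (32^n) :: rat)
        = (of_int (D k) * ff k r) * 32^(n-k) / (32^k * 32^(n-k))"
      by (simp add: h32 ffz)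
    also have "\<dots> = of_int (D k) * ff k r / 32^k" by simp
    also have "\<dots> = (of_nat ((2 * k) choose k) ^ 2 / 32 ^ k) * ff k r - T n k * ff k r"
      by (simp add: D_def T_def hh' field_simps)
    finally show ?thesis by simp
  qed
  have Sd: "S - d n r = of_int N / of_int (32^n)"
  proof -
    have "S - d n r = (\<Sum>k=0..n. (of_nat ((2 * k) choose k) ^ 2 / 32 ^ k) * ff k r - T n k * ff k r)"
      unfolding S2 d_def by (simp add: sum_subtractf)
    also have "\<dots> = (\<Sum>k=0..n. of_int (D k * 32^(n-k) * Fz k) / of_int (32^n))"
      by (rule sum.cong[OF refl]) (rule tm, simp)
    also have "\<dots> = of_int N / of_int (32^n)"
      unfolding N_def by (simp add: sum_divide_distrib)
    finally show ?thesis .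
  qed
  have pN: "int p ^ 2 dvd N"
    unfolding N_def
  proof (rule dvd_sum)
    fix k assume "k \<in> {0..n}"
    then have "k \<le> n" by simp
    then have "(int (2*n+1))^2 dvd D k" unfolding D_def by (rule key[OF pr])
    then show "int p ^ 2 dvd D k * 32^(n-k) * Fz k" using p2 by (simp add: dvd_mult2)
  qed
  have p32: "\<not> int p dvd 32^n"
  proof
    assume a: "int p dvd 32^n"
    have ip: "prime (int p)" using assms(1) by simp
    have "int p dvd 32" using prime_dvd_power[OF ip a] .
    then have "p dvd 32" by (metis int_dvd_int_iff of_nat_numeral)
    then have "p dvd 2^5" by simp
    then have "p dvd 2" using prime_dvd_power[OF assms(1)] by blast
    then have "p \<le> 2" by (simp add: dvd_imp_le)
    moreover have "p \<ge> 2" using assms(1) by (simp add: prime_ge_2_nat)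
    ultimately have "p = 2" by simp
    then show False using assms(2) by simp
  qed
  have qc: "qcong (int p) S (d n r) (int p ^ 2)"
    unfolding qcong_def using Sd pN p32 by blast
  have dv: "d n r = (if even (n - r) then E n r else 0)" using d_val[OF rn] .
  show ?thesis
  proof (intro conjI impI)
    assume "4 dvd (p + 1 - 2 * r)"
    then have "odd (n - r)" using p2 rn by presburger
    then have "d n r = 0" using dv by simp
    then show "qcong (int p) S 0 (int p ^ 2)" using qc by simp
  next
    assume "4 dvd (p - 1 - 2 * r)"
    then have ev: "even (n - r)" using p2 rn by presburger
    have e1: "(p - 1 + 2 * r) div 4 = (n + r) div 2" using p2 by presburger
    have e2: "(p - 1) div 2 = n" using n_def by simp
    have e3: "(p - 1 - 2 * r) div 4 = (n - r) div 2" using p2 rn by presburger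
    have "(-1) ^ ((p - 1 + 2 * r) div 4) / 2 ^ ((p - 1) div 2)
                * of_nat (fact ((p - 1) div 2 + r))
                / (of_nat (fact ((p - 1 - 2 * r) div 4)) * of_nat (fact ((p - 1 + 2 * r) div 4))) = E n r"
      unfolding E_def by (simp only: e1 e2 e3)
    moreover have "d n r = E n r" using dv ev by simp
    ultimately show "qcong (int p) S ((-1) ^ ((p - 1 + 2 * r) div 4) / 2 ^ ((p - 1) div 2)
                * of_nat (fact ((p - 1) div 2 + r))
                / (of_nat (fact ((p - 1 - 2 * r) div 4)) * of_nat (fact ((p - 1 + 2 * r) div 4)))) (int p ^ 2)"
      using qc by simp
  qed
qed

end
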